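(* Let $f=\sum_{j=0}^7f_je_j$ be a paravector-valued function on $\mathbb R^8$ whose coordinate functions have partial derivatives, identified with the octonion-valued function with the same coordinates. Then: (a) $f$ is left regular if and only if $[\partial_xfI]_0=0$ and $[\partial_xfI]_1=0$; (b) $f$ is B-regular (both left and right regular) if and only if $[\partial_xfI]_0=0$, $[\partial_xfI]_1=0$, and $[\partial_xfW]_1=0$.
   Context: $\mathrm{Cl}_{0,7}$ is the real associative Clifford algebra generated by $e_1,\dots,e_7$ with $e_ie_j+e_je_i=-2\delta_{ij}$ and $e_0=1$; $e_{i_1\cdots i_k}=e_{i_1}\cdots e_{i_k}$; $[c]_k$ is the grade-$k$ part of $c$. $\partial_xf=\sum_{i,j=0}^7e_ie_j\,\partial_{x_i}f_j$ (Clifford product), and $\partial_xfI$, $\partial_xfW$ denote Clifford products of $\partial_xf$ with $I$, $W$. $W=e_{123}+e_{145}+e_{176}+e_{246}+e_{257}+e_{347}+e_{365}$ and $I=\frac1{16}(1+We_{1234567})(1-e_{1234567})$. $\mathbb O$ is the octonion algebra with basis $1,e_1,\dots,e_7$ and product $\circ$ determined by: $e_i\circ e_i=-1$, $e_i\circ e_j=-e_j\circ e_i$ ($i\ne j$), and $e_i\circ e_j=e_k$, $e_j\circ e_k=e_i$, $e_k\circ e_i=e_j$ for each ordered triple $(i,j,k)\in\{(1,2,3),(1,4,5),(1,7,6),(2,4,6),(2,5,7),(3,4,7),(3,6,5)\}$. For octonion-valued $f$: $D_xf=\sum_{i,j=0}^7e_i\circ e_j\,\partial_{x_i}f_j$,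 $fD_x=\sum_{i,j=0}^7e_j\circ e_i\,\partial_{x_i}f_j$; left regular means $D_xf=0$, right regular means $fD_x=0$. *)

theory Defs
  imports "HOL-Analysis.Analysis"
begin

text \<open>Elements of Cl(0,7) are coefficient functions on blades; a blade is a subset
  of {1..7} (the sorted product of its generators). Only subsets of {1..7} carry
  meaningful coefficients.\<close>

type_synonym cl = "nat set \<Rightarrow> real"

definition blades :: "nat set set" where
  "blades = Pow {1..7}"

text \<open>Sign in e_A e_B = csign A B * e_(A symmetric-difference B), using e_i e_i = -1.\<close>
definition csign :: "nat set \<Rightarrow> nat set \<Rightarrow> real" where
  "csign A B = (-1) ^ (card {(a, b). a \<in> A \<and> b \<in> B \<and> b < a} + card (A \<inter> B))"

definition cmul :: "cl \<Rightarrow> cl \<Rightarrow> cl" where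
  "cmul x y = (\<lambda>C. \<Sum>A\<in>blades. \<Sum>B\<in>blades.
      (if (A - B) \<union> (B - A) = C then csign A B * x A * y B else 0))"

definition cadd :: "cl \<Rightarrow> cl \<Rightarrow> cl" where
  "cadd x y = (\<lambda>C. x C + y C)"

definition cscale :: "real \<Rightarrow> cl \<Rightarrow> cl" where
  "cscale r x = (\<lambda>C. r * x C)"

definition blade :: "nat set \<Rightarrow> cl" where
  "blade S = (\<lambda>A. if A = S then 1 else 0)"

definition cgen :: "nat \<Rightarrow> cl" where
  "cgen i = blade (if i = 0 then {} else {i})"

definition e3 :: "nat \<Rightarrow> nat \<Rightarrow> nat \<Rightarrow> cl" where
  "e3 i j k = cmul (cgen i) (cmul (cgen j) (cgen k))"

definition cW :: cl where
  "cW = (\<lambda>C. e3 1 2 3 C + e3 1 4 5 C + e3 1 7 6 C + e3 2 4 6 C + e3 2 5 7 C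
             + e3 3 4 7 C + e3 3 6 5 C)"

definition e1234567 :: cl where
  "e1234567 = cmul (cgen 1) (cmul (cgen 2) (cmul (cgen 3) (cmul (cgen 4)
                (cmul (cgen 5) (cmul (cgen 6) (cgen 7))))))"

definition cI :: cl where
  "cI = cscale (1/16) (cmul (cadd (cgen 0) (cmul cW e1234567))
                           (cadd (cgen 0) (cscale (-1) e1234567)))"

definition grade :: "nat \<Rightarrow> cl \<Rightarrow> cl" where
  "grade k c = (\<lambda>A. if card A = k then c A else 0)"

definition oct_triples :: "(nat \<times> nat \<times> nat) list" where
  "oct_triples = [(1,2,3),(1,4,5),(1,7,6),(2,4,6),(2,5,7),(3,4,7),(3,6,5)]"

definition oct_cyc :: "(nat \<times> nat \<times> nat) set" where
  "oct_cyc = (\<Union>(a,b,c)\<in>set oct_triples. {(a,b,c),(b,c,a),(c,a,b)})"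

text \<open>oprod i j k = coefficient of e_k in e_i \<circ> e_j.\<close>
definition oprod :: "nat \<Rightarrow> nat \<Rightarrow> nat \<Rightarrow> real" where
  "oprod i j k =
     (if i = 0 then (if k = j then 1 else 0)
      else if j = 0 then (if k = i then 1 else 0)
      else if i = j then (if k = 0 then -1 else 0)
      else if (i, j, k) \<in> oct_cyc then 1
      else if (j, i, k) \<in> oct_cyc then -1
      else 0)"

text \<open>Coordinates x_0..x_7 of a point x in R^8 are x $ of_nat i.\<close>
definition pd :: "nat \<Rightarrow> (real^8 \<Rightarrow> real) \<Rightarrow> real^8 \<Rightarrow> real" where
  "pd i g x = deriv (\<lambda>t. g (x + t *\<^sub>R axis (of_nat i :: 8) 1)) 0"

definition has_partials :: "(nat \<Rightarrow> real^8 \<Rightarrow> real) \<Rightarrow> bool" where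
  "has_partials f = (\<forall>i<8. \<forall>j<8. \<forall>x.
      (\<lambda>t. f j (x + t *\<^sub>R axis (of_nat i :: 8) 1)) differentiable (at 0))"

text \<open>D_x f and f D_x, as octonion coefficient vectors (index k = 0..7).\<close>
definition Dleft :: "(nat \<Rightarrow> real^8 \<Rightarrow> real) \<Rightarrow> real^8 \<Rightarrow> nat \<Rightarrow> real" where
  "Dleft f x k = (\<Sum>i<8. \<Sum>j<8. oprod i j k * pd i (f j) x)"

definition Dright :: "(nat \<Rightarrow> real^8 \<Rightarrow> real) \<Rightarrow> real^8 \<Rightarrow> nat \<Rightarrow> real" where
  "Dright f x k = (\<Sum>i<8. \<Sum>j<8. oprod j i k * pd i (f j) x)"

definition left_regular :: "(nat \<Rightarrow> real^8 \<Rightarrow> real) \<Rightarrow> bool" where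
  "left_regular f = (\<forall>x. \<forall>k<8. Dleft f x k = 0)"

definition right_regular :: "(nat \<Rightarrow> real^8 \<Rightarrow> real) \<Rightarrow> bool" where
  "right_regular f = (\<forall>x. \<forall>k<8. Dright f x k = 0)"

text \<open>Clifford Dirac operator applied to the paravector-valued f.\<close>
definition cDirac :: "(nat \<Rightarrow> real^8 \<Rightarrow> real) \<Rightarrow> real^8 \<Rightarrow> cl" where
  "cDirac f x = (\<lambda>C. \<Sum>i<8. \<Sum>j<8. pd i (f j) x * cmul (cgen i) (cgen j) C)"

end

theory Submission
  imports Defs
begin


lemma card_filter_sum: "finite B \<Longrightarrow> card {b\<in>B. P b} = (\<Sum>b\<in>B. (if P b then 1 else 0::nat))"
  by (subst card_eq_sum) (rule sum.inter_filter)

lemma csign_eq: "finite A \<Longrightarrow> finite B \<Longrightarrow> csign A B =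
  (-1) ^ (\<Sum>a\<in>A. (\<Sum>b\<in>B. (if b < a then 1 else 0)) + (if a \<in> B then 1 else 0))"
proof -
  assume fA: "finite A" and fB: "finite B"
  have 1: "{(a, b). a \<in> A \<and> b \<in> B \<and> b < a} = Sigma A (\<lambda>a. {b\<in>B. b<a})" by auto
  have "card {(a, b). a \<in> A \<and> b \<in> B \<and> b < a} = (\<Sum>a\<in>A. card {b\<in>B. b<a})"
    unfolding 1 using fA fB by (intro card_SigmaI) auto
  also have "\<dots> = (\<Sum>a\<in>A. (\<Sum>b\<in>B. (if b < a then 1 else 0)))"
    using card_filter_sum[OF fB] by presburger
  finally have c1: "card {(a, b). a \<in> A \<and> b \<in> B \<and> b < a} = (\<Sum>a\<in>A. (\<Sum>b\<in>B. (if b < a then 1 else 0)))" .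
  have "A \<inter> B = {a\<in>A. a\<in>B}" by auto
  then have c2: "card (A \<inter> B) = (\<Sum>a\<in>A. (if a \<in> B then 1 else 0))"
    using card_filter_sum[OF fA] by presburger
  show ?thesis unfolding csign_def c1 c2 by (simp only: sum.distrib)
qed
fun sdl :: "nat list \<Rightarrow> nat list \<Rightarrow> nat list" where
  "sdl [] ys = ys"
| "sdl xs [] = xs"
| "sdl (x#xs) (y#ys) = (if x < y then x # sdl xs (y#ys) else if y < x then y # sdl (x#xs) ys else sdl xs ys)"

lemma sdl_set_sub: "set (sdl xs ys) \<subseteq> set xs \<union> set ys"
  by (induction xs ys rule: sdl.induct) auto

lemma sdl_set: "sorted_wrt (<) xs \<Longrightarrow> sorted_wrt (<) ys \<Longrightarrow>
   set (sdl xs ys) = (set xs - set ys) \<union> (set ys - set xs)"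
proof (induction xs ys rule: sdl.induct)
  case (3 x xs y ys)
  have hx: "\<forall>z\<in>set xs. x < z" and hy: "\<forall>z\<in>set ys. y < z"
    and sx: "sorted_wrt (<) xs" and sy: "sorted_wrt (<) ys" using 3(4,5) by auto
  consider "x < y" | "y < x" | "x = y" by linarith
  then show ?case
  proof cases
    case 1
    then have "set (sdl xs (y#ys)) = (set xs - set (y#ys)) \<union> (set (y#ys) - set xs)"
      using 3(1) sx 3(5) by simp
    moreover have "x \<notin> set (y#ys)" using 1 hy by auto
    ultimately show ?thesis using 1 by auto
  next
    case 2
    then have "set (sdl (x#xs) ys) = (set (x#xs) - set ys) \<union> (set ys - set (x#xs))"
      using 3(2) sy 3(4) by simp
    moreover have "y \<notin> set (x#xs)" using 2 hx by auto
    ultimately show ?thesis using 2 by auto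
  next
    case 3
    then have "set (sdl xs ys) = (set xs - set ys) \<union> (set ys - set xs)"
      using "3.IH"(3) sx sy by simp
    moreover have "x \<notin> set xs" "y \<notin> set ys" using hx hy by auto
    ultimately show ?thesis using 3 by auto
  qed
qed auto

lemma sdl_sorted: "sorted_wrt (<) xs \<Longrightarrow> sorted_wrt (<) ys \<Longrightarrow> sorted_wrt (<) (sdl xs ys)"
proof (induction xs ys rule: sdl.induct)
  case (3 x xs y ys)
  have hx: "\<forall>z\<in>set xs. x < z" and hy: "\<forall>z\<in>set ys. y < z"
    and sx: "sorted_wrt (<) xs" and sy: "sorted_wrt (<) ys" using 3(4,5) by auto
  consider "x < y" | "y < x" | "x = y" by linarith
  then show ?case
  proof cases
    case 1
    have "set (sdl xs (y#ys)) \<subseteq> set xs \<union> set (y#ys)" by (rule sdl_set_sub)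
    then have "\<forall>z\<in>set (sdl xs (y#ys)). x < z" using 1 hx hy by fastforce
    then show ?thesis using 1 3(1) sx 3(5) by simp
  next
    case 2
    have "set (sdl (x#xs) ys) \<subseteq> set (x#xs) \<union> set ys" by (rule sdl_set_sub)
    then have "\<forall>z\<in>set (sdl (x#xs) ys). y < z" using 2 hx hy by fastforce
    then show ?thesis using 2 3(2) sy 3(4) by simp
  next
    case 3
    then show ?thesis using "3.IH"(3) sx sy by simp
  qed
qed auto

definition invn :: "nat list \<Rightarrow> nat list \<Rightarrow> nat" where
  "invn xs ys = (\<Sum>a\<leftarrow>xs. (\<Sum>b\<leftarrow>ys. (if b < a then 1 else 0)) + (if a \<in> set ys then 1 else 0))"

lemma csign_list: "distinct xs \<Longrightarrow> distinct ys \<Longrightarrow> csign (set xs) (set ys) = (-1) ^ invn xs ys"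
  by (simp add: csign_eq invn_def sum_list_distinct_conv_sum_set)


definition wfb :: "nat list \<Rightarrow> bool" where
  "wfb xs = (sorted_wrt (<) xs \<and> set xs \<subseteq> {1..7})"

definition wfL :: "(nat list \<times> real) list \<Rightarrow> bool" where
  "wfL L = (\<forall>p\<in>set L. wfb (fst p))"

definition lin :: "(nat list \<times> real) list \<Rightarrow> cl" where
  "lin L = (\<lambda>C. \<Sum>p\<leftarrow>L. if C = set (fst p) then snd p else 0)"

definition lmul :: "(nat list \<times> real) list \<Rightarrow> (nat list \<times> real) list \<Rightarrow> (nat list \<times> real) list" where
  "lmul L1 L2 = concat (map (\<lambda>p. map (\<lambda>q. (sdl (fst p) (fst q),
       (-1) ^ invn (fst p) (fst q) * snd p * snd q)) L2) L1)"

lemma fin_blades: "finite blades" by (simp add: blades_def)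

lemma cmul_outside: "\<not> C \<subseteq> {1..7} \<Longrightarrow> cmul x y C = 0"
  unfolding cmul_def blades_def by (intro sum.neutral ballI) auto

lemma if_add0: "(if P then a + b else (0::real)) = (if P then a else 0) + (if P then b else 0)"
  by simp

lemma cmul_cadd_left: "cmul (cadd x y) z = cadd (cmul x z) (cmul y z)"
proof (rule ext)
  fix C
  have e: "\<And>A B. (if (A - B) \<union> (B - A) = C then csign A B * cadd x y A * z B else 0) =
     (if (A - B) \<union> (B - A) = C then csign A B * x A * z B else 0) +
     (if (A - B) \<union> (B - A) = C then csign A B * y A * z B else 0)"
    by (simp add: cadd_def algebra_simps)
  show "cmul (cadd x y) z C = cadd (cmul x z) (cmul y z) C"
    unfolding cmul_def cadd_def[of "cmul x z"] e by (simp add: sum.distrib cmul_def cadd_def)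
qed

lemma cmul_cadd_right: "cmul z (cadd x y) = cadd (cmul z x) (cmul z y)"
proof (rule ext)
  fix C
  have e: "\<And>A B. (if (A - B) \<union> (B - A) = C then csign A B * z A * cadd x y B else 0) =
     (if (A - B) \<union> (B - A) = C then csign A B * z A * x B else 0) +
     (if (A - B) \<union> (B - A) = C then csign A B * z A * y B else 0)"
    by (simp add: cadd_def algebra_simps)
  show "cmul z (cadd x y) C = cadd (cmul z x) (cmul z y) C"
    unfolding cmul_def cadd_def[of "cmul z x"] e by (simp add: sum.distrib cmul_def cadd_def)
qed

lemma cmul_cscale_left: "cmul (cscale r x) y = cscale r (cmul x y)"
  unfolding cmul_def cscale_def
  by (rule ext) (simp add: sum_distrib_left if_distrib mult_ac cong: if_cong)

lemma cmul_cscale_right: "cmul x (cscale r y) = cscale r (cmul x y)"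
  unfolding cmul_def cscale_def
  by (rule ext) (simp add: sum_distrib_left if_distrib mult_ac cong: if_cong)

lemma cmul_zero_left: "cmul (\<lambda>_. 0) y = (\<lambda>_. 0)"
  by (rule ext) (simp add: cmul_def cong: if_cong)

lemma cmul_blade: assumes "A \<in> blades" "B \<in> blades"
  shows "cmul (blade A) (blade B) = cscale (csign A B) (blade ((A - B) \<union> (B - A)))"
proof (rule ext)
  fix C
  define v where "v = (if (A - B) \<union> (B - A) = C then csign A B else 0)"
  have "cmul (blade A) (blade B) C = (\<Sum>A'\<in>blades. \<Sum>B'\<in>blades. if A' = A \<and> B' = B then v else 0)"
    unfolding cmul_def blade_def v_def by (intro sum.cong refl) auto
  also have "\<dots> = (\<Sum>A'\<in>blades. if A' = A then v else 0)"
  proof (intro sum.cong refl)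
    fix A' show "(\<Sum>B'\<in>blades. if A' = A \<and> B' = B then v else 0) = (if A' = A then v else 0)"
      using assms fin_blades by (cases "A' = A") simp_all
  qed
  also have "\<dots> = v"
    using assms fin_blades by simp
  finally show "cmul (blade A) (blade B) C = cscale (csign A B) (blade ((A - B) \<union> (B - A))) C"
    unfolding cscale_def blade_def v_def by auto
qed


lemma cmul_zero_right: "cmul x (\<lambda>_. 0) = (\<lambda>_. 0)"
  by (rule ext) (simp add: cmul_def cong: if_cong)

lemma wfb_blade: "wfb xs \<Longrightarrow> set xs \<in> blades"
  by (simp add: wfb_def blades_def)

lemma wfb_distinct: "wfb xs \<Longrightarrow> distinct xs"
  by (simp add: wfb_def strict_sorted_iff)

lemma lin_Nil: "lin [] = (\<lambda>_. 0)"
  by (simp add: lin_def)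

lemma lin_Cons: "lin (p#L) = cadd (cscale (snd p) (blade (set (fst p)))) (lin L)"
  by (rule ext) (simp add: lin_def cadd_def cscale_def blade_def)

lemma lin_append: "lin (L1 @ L2) = cadd (lin L1) (lin L2)"
  by (rule ext) (simp add: lin_def cadd_def)

lemma cscale_lin: "cscale r (lin L) = lin (map (\<lambda>q. (fst q, r * snd q)) L)"
proof (rule ext)
  fix C
  have "cscale r (lin L) C = (\<Sum>p\<leftarrow>L. r * (if C = set (fst p) then snd p else 0))"
    unfolding cscale_def lin_def by (simp add: sum_list_const_mult o_def)
  also have "\<dots> = lin (map (\<lambda>q. (fst q, r * snd q)) L) C"
    unfolding lin_def by (simp add: o_def if_distrib[of "\<lambda>x. r * x"] cong: if_cong)
  finally show "cscale r (lin L) C = lin (map (\<lambda>q. (fst q, r * snd q)) L) C" .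
qed

lemma cscale_cscale: "cscale r (cscale s x) = cscale (r * s) x"
  by (rule ext) (simp add: cscale_def)

lemma wfb_sdl: "wfb xs \<Longrightarrow> wfb ys \<Longrightarrow> wfb (sdl xs ys)"
  using sdl_sorted sdl_set_sub[of xs ys] by (auto simp: wfb_def)

lemma cmul_blade_lin: "wfb xs \<Longrightarrow> wfL L \<Longrightarrow> cmul (blade (set xs)) (lin L) =
   lin (map (\<lambda>q. (sdl xs (fst q), (-1) ^ invn xs (fst q) * snd q)) L)"
proof (induction L)
  case Nil
  then show ?case by (simp add: lin_Nil cmul_zero_right)
next
  case (Cons q L)
  have wq: "wfb (fst q)" and wL: "wfL L" using Cons.prems by (auto simp: wfL_def)
  have "cmul (blade (set xs)) (blade (set (fst q))) =
     cscale ((-1) ^ invn xs (fst q)) (blade (set (sdl xs (fst q))))"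
    using cmul_blade[OF wfb_blade[OF Cons.prems(1)] wfb_blade[OF wq]]
      csign_list[OF wfb_distinct[OF Cons.prems(1)] wfb_distinct[OF wq]]
      sdl_set[of xs "fst q"] Cons.prems(1) wq by (simp add: wfb_def)
  then show ?case using Cons.IH[OF Cons.prems(1) wL]
    by (simp add: lin_Cons cmul_cadd_right cmul_cscale_right cscale_cscale mult.commute)
qed

lemma wfL_lmul: "wfL L1 \<Longrightarrow> wfL L2 \<Longrightarrow> wfL (lmul L1 L2)"
  by (auto simp: wfL_def lmul_def intro: wfb_sdl)

lemma cmul_lin: "wfL L1 \<Longrightarrow> wfL L2 \<Longrightarrow> cmul (lin L1) (lin L2) = lin (lmul L1 L2)"
proof (induction L1)
  case Nil
  then show ?case by (simp add: lin_Nil cmul_zero_left lmul_def)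
next
  case (Cons p L1)
  have wp: "wfb (fst p)" and wL: "wfL L1" using Cons.prems by (auto simp: wfL_def)
  have "lmul (p#L1) L2 = map (\<lambda>q. (sdl (fst p) (fst q), (-1) ^ invn (fst p) (fst q) * snd p * snd q)) L2 @ lmul L1 L2"
    by (simp add: lmul_def)
  then show ?case using Cons.IH[OF wL Cons.prems(2)] cmul_blade_lin[OF wp Cons.prems(2)]
    by (simp add: lin_Cons lin_append cmul_cadd_left cmul_cscale_left cscale_lin o_def mult_ac)
qed

lemma lin_eval: "wfL L \<Longrightarrow> sorted_wrt (<) ys \<Longrightarrow> lin L (set ys) = (\<Sum>p\<leftarrow>L. if ys = fst p then snd p else 0)"
  unfolding lin_def
  by (intro arg_cong[where f=sum_list] map_cong refl) (auto simp: wfL_def wfb_def dest: strict_sorted_equal)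

lemma cgen_lin: "cgen i = lin [(if i = 0 then [] else [i], 1)]"
  by (rule ext) (simp add: cgen_def blade_def lin_def)

lemma cadd_lin: "cadd (lin L1) (lin L2) = lin (L1 @ L2)"
  by (simp add: lin_append)


definition "LE = [([1::nat, 2, 3, 4, 5, 6, 7], 1::real)]"
definition "LW = [([1::nat, 2, 3], 1::real), ([1, 4, 5], 1), ([1, 6, 7], - 1),
      ([2, 4, 6], 1), ([2, 5, 7], 1), ([3, 4, 7], 1), ([3, 5, 6], - 1)]"
definition "LI = [([], 1 / 16), ([1::nat, 2, 3, 4, 5, 6, 7], - (1 / 16::real)),
      ([4, 5, 6, 7], 1 / 16), ([1, 2, 3], - (1 / 16)),
      ([2, 3, 6, 7], 1 / 16), ([1, 4, 5], - (1 / 16)),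
      ([2, 3, 4, 5], - (1 / 16)), ([1, 6, 7], 1 / 16),
      ([1, 3, 5, 7], 1 / 16), ([2, 4, 6], - (1 / 16)),
      ([1, 3, 4, 6], 1 / 16), ([2, 5, 7], - (1 / 16)),
      ([1, 2, 5, 6], 1 / 16), ([3, 4, 7], - (1 / 16)),
      ([1, 2, 4, 7], - (1 / 16)), ([3, 5, 6], 1 / 16)]"

lemma wfL_simps: "wfL [] = True" "wfL (p # L) = (wfb (fst p) \<and> wfL L)"
  "wfL (L1 @ L2) = (wfL L1 \<and> wfL L2)"
  by (auto simp: wfL_def)

lemmas evsimps = lmul_def invn_def wfL_simps wfb_def

lemma cE: "e1234567 = lin LE"
  unfolding e1234567_def cgen_lin
  by (simp add: cmul_lin wfL_lmul evsimps LE_def)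

lemma cW: "cW = lin LW"
  unfolding cW_def e3_def cgen_lin
  apply (simp add: cmul_lin wfL_lmul evsimps)
  apply (simp add: LW_def lin_def add.assoc)
  done

lemma cI: "cI = lin LI"
  unfolding cI_def cE cW cgen_lin
  by (simp add: cmul_lin wfL_lmul evsimps LW_def LE_def LI_def cadd_lin cscale_lin)

definition gl :: "nat \<Rightarrow> nat list" where "gl i = (if i = 0 then [] else [i])"

lemma lt8: "{..<8::nat} = {0,1,2,3,4,5,6,7}" by (rule set_eqI) (simp only: lessThan_iff insert_iff empty_iff; arith)
lemma all8: "(\<forall>i<(8::nat). P i) = (P 0 \<and> P 1 \<and> P 2 \<and> P 3 \<and> P 4 \<and> P 5 \<and> P 6 \<and> P 7)"
proof -
  have "(\<forall>i<(8::nat). P i) = (\<forall>i\<in>{..<8}. P i)" by auto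
  then show ?thesis unfolding lt8 by simp
qed
lemma oprod_tab: "oct_cyc = {(1,2,3),(2,3,1),(3,1,2),(1,4,5),(4,5,1),(5,1,4),(1,7,6),(7,6,1),(6,1,7),
  (2,4,6),(4,6,2),(6,2,4),(2,5,7),(5,7,2),(7,2,5),(3,4,7),(4,7,3),(7,3,4),(3,6,5),(6,5,3),(5,3,6)}"
  by (auto simp: oct_cyc_def oct_triples_def)

lemma tabI0: "\<forall>j<8. \<forall>k<8. (\<Sum>p\<leftarrow>lmul (lmul [(gl 0,1)] [(gl j,1)]) LI. if gl k = fst p then snd p else 0) = oprod 0 j k / 16"
  unfolding all8 by (simp add: evsimps LI_def gl_def oprod_def oprod_tab)

lemma tabW0: "\<forall>j<8. \<forall>k<8. (\<Sum>p\<leftarrow>lmul (lmul [(gl 0,1)] [(gl j,1)]) LW. if gl k = fst p then snd p else 0) = (oprod j 0 k - oprod 0 j k) / 2"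
  unfolding all8 by (simp add: evsimps LW_def gl_def oprod_def oprod_tab)

lemma tabI1: "\<forall>j<8. \<forall>k<8. (\<Sum>p\<leftarrow>lmul (lmul [(gl 1,1)] [(gl j,1)]) LI. if gl k = fst p then snd p else 0) = oprod 1 j k / 16"
  unfolding all8 by (simp add: evsimps LI_def gl_def oprod_def oprod_tab)

lemma tabW1: "\<forall>j<8. \<forall>k<8. (\<Sum>p\<leftarrow>lmul (lmul [(gl 1,1)] [(gl j,1)]) LW. if gl k = fst p then snd p else 0) = (oprod j 1 k - oprod 1 j k) / 2"
  unfolding all8 by (simp add: evsimps LW_def gl_def oprod_def oprod_tab)

lemma tabI2: "\<forall>j<8. \<forall>k<8. (\<Sum>p\<leftarrow>lmul (lmul [(gl 2,1)] [(gl j,1)]) LI. if gl k = fst p then snd p else 0) = oprod 2 j k / 16"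
  unfolding all8 by (simp add: evsimps LI_def gl_def oprod_def oprod_tab)

lemma tabW2: "\<forall>j<8. \<forall>k<8. (\<Sum>p\<leftarrow>lmul (lmul [(gl 2,1)] [(gl j,1)]) LW. if gl k = fst p then snd p else 0) = (oprod j 2 k - oprod 2 j k) / 2"
  unfolding all8 by (simp add: evsimps LW_def gl_def oprod_def oprod_tab)

lemma tabI3: "\<forall>j<8. \<forall>k<8. (\<Sum>p\<leftarrow>lmul (lmul [(gl 3,1)] [(gl j,1)]) LI. if gl k = fst p then snd p else 0) = oprod 3 j k / 16"
  unfolding all8 by (simp add: evsimps LI_def gl_def oprod_def oprod_tab)

lemma tabW3: "\<forall>j<8. \<forall>k<8. (\<Sum>p\<leftarrow>lmul (lmul [(gl 3,1)] [(gl j,1)]) LW. if gl k = fst p then snd p else 0) = (oprod j 3 k - oprod 3 j k) / 2"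
  unfolding all8 by (simp add: evsimps LW_def gl_def oprod_def oprod_tab)

lemma tabI4: "\<forall>j<8. \<forall>k<8. (\<Sum>p\<leftarrow>lmul (lmul [(gl 4,1)] [(gl j,1)]) LI. if gl k = fst p then snd p else 0) = oprod 4 j k / 16"
  unfolding all8 by (simp add: evsimps LI_def gl_def oprod_def oprod_tab)

lemma tabW4: "\<forall>j<8. \<forall>k<8. (\<Sum>p\<leftarrow>lmul (lmul [(gl 4,1)] [(gl j,1)]) LW. if gl k = fst p then snd p else 0) = (oprod j 4 k - oprod 4 j k) / 2"
  unfolding all8 by (simp add: evsimps LW_def gl_def oprod_def oprod_tab)

lemma tabI5: "\<forall>j<8. \<forall>k<8. (\<Sum>p\<leftarrow>lmul (lmul [(gl 5,1)] [(gl j,1)]) LI. if gl k = fst p then snd p else 0) = oprod 5 j k / 16"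
  unfolding all8 by (simp add: evsimps LI_def gl_def oprod_def oprod_tab)

lemma tabW5: "\<forall>j<8. \<forall>k<8. (\<Sum>p\<leftarrow>lmul (lmul [(gl 5,1)] [(gl j,1)]) LW. if gl k = fst p then snd p else 0) = (oprod j 5 k - oprod 5 j k) / 2"
  unfolding all8 by (simp add: evsimps LW_def gl_def oprod_def oprod_tab)

lemma tabI6: "\<forall>j<8. \<forall>k<8. (\<Sum>p\<leftarrow>lmul (lmul [(gl 6,1)] [(gl j,1)]) LI. if gl k = fst p then snd p else 0) = oprod 6 j k / 16"
  unfolding all8 by (simp add: evsimps LI_def gl_def oprod_def oprod_tab)

lemma tabW6: "\<forall>j<8. \<forall>k<8. (\<Sum>p\<leftarrow>lmul (lmul [(gl 6,1)] [(gl j,1)]) LW. if gl k = fst p then snd p else 0) = (oprod j 6 k - oprod 6 j k) / 2"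
  unfolding all8 by (simp add: evsimps LW_def gl_def oprod_def oprod_tab)

lemma tabI7: "\<forall>j<8. \<forall>k<8. (\<Sum>p\<leftarrow>lmul (lmul [(gl 7,1)] [(gl j,1)]) LI. if gl k = fst p then snd p else 0) = oprod 7 j k / 16"
  unfolding all8 by (simp add: evsimps LI_def gl_def oprod_def oprod_tab)

lemma tabW7: "\<forall>j<8. \<forall>k<8. (\<Sum>p\<leftarrow>lmul (lmul [(gl 7,1)] [(gl j,1)]) LW. if gl k = fst p then snd p else 0) = (oprod j 7 k - oprod 7 j k) / 2"
  unfolding all8 by (simp add: evsimps LW_def gl_def oprod_def oprod_tab)

lemma tabI: "\<forall>i<8. \<forall>j<8. \<forall>k<8. (\<Sum>p\<leftarrow>lmul (lmul [(gl i,1)] [(gl j,1)]) LI. if gl k = fst p then snd p else 0) = oprod i j k / 16"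
  apply (subst all8)
  by (intro conjI tabI0 tabI1 tabI2 tabI3 tabI4 tabI5 tabI6 tabI7)

lemma tabW: "\<forall>i<8. \<forall>j<8. \<forall>k<8. (\<Sum>p\<leftarrow>lmul (lmul [(gl i,1)] [(gl j,1)]) LW. if gl k = fst p then snd p else 0) = (oprod j i k - oprod i j k) / 2"
  apply (subst all8)
  by (intro conjI tabW0 tabW1 tabW2 tabW3 tabW4 tabW5 tabW6 tabW7)



lemma wfb_gl: "i < 8 \<Longrightarrow> wfb (gl i)" by (auto simp: wfb_def gl_def)
lemma wfL_gl: "i < 8 \<Longrightarrow> wfL [(gl i, 1)]" by (simp add: wfL_def wfb_gl)
lemma sorted_gl: "sorted_wrt (<) (gl k)" by (simp add: gl_def)
lemma cgen_gl: "cgen i = lin [(gl i, 1)]" by (simp add: cgen_lin gl_def)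
lemma wfL_LI: "wfL LI" by (simp add: wfL_def wfb_def LI_def)
lemma wfL_LW: "wfL LW" by (simp add: wfL_def wfb_def LW_def)

lemma NI: "i < 8 \<Longrightarrow> j < 8 \<Longrightarrow> k < 8 \<Longrightarrow>
  cmul (cmul (cgen i) (cgen j)) cI (set (gl k)) = oprod i j k / 16"
  using tabI wfL_gl[of i] wfL_gl[of j] wfL_LI
  by (simp add: cgen_gl cI cmul_lin wfL_lmul lin_eval sorted_gl)

lemma NW: "i < 8 \<Longrightarrow> j < 8 \<Longrightarrow> k < 8 \<Longrightarrow>
  cmul (cmul (cgen i) (cgen j)) cW (set (gl k)) = (oprod j i k - oprod i j k) / 2"
  using tabW wfL_gl[of i] wfL_gl[of j] wfL_LW
  by (simp add: cgen_gl cW cmul_lin wfL_lmul lin_eval sorted_gl)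

lemma cmul_sum_left: "finite I \<Longrightarrow> cmul (\<lambda>C. \<Sum>i\<in>I. g i C) y = (\<lambda>C. \<Sum>i\<in>I. cmul (g i) y C)"
proof (induction I rule: finite_induct)
  case empty
  then show ?case by (simp add: cmul_zero_left)
next
  case (insert a I)
  have eq: "(\<lambda>C. \<Sum>i\<in>insert a I. g i C) = cadd (g a) (\<lambda>C. \<Sum>i\<in>I. g i C)"
    using insert by (simp add: cadd_def)
  have "cmul (\<lambda>C. \<Sum>i\<in>insert a I. g i C) y = cadd (cmul (g a) y) (cmul (\<lambda>C. \<Sum>i\<in>I. g i C) y)"
    unfolding eq by (rule cmul_cadd_left)
  also have "\<dots> = (\<lambda>C. \<Sum>i\<in>insert a I. cmul (g i) y C)"
    using insert by (simp add: cadd_def)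
  finally show ?case .
qed

lemma cDirac_mul: "cmul (cDirac f x) y C =
  (\<Sum>i<8. \<Sum>j<8. pd i (f j) x * cmul (cmul (cgen i) (cgen j)) y C)"
proof -
  have "cmul (cDirac f x) y C = (\<Sum>i<8. cmul (\<lambda>C. \<Sum>j<8. pd i (f j) x * cmul (cgen i) (cgen j) C) y C)"
    unfolding cDirac_def by (subst cmul_sum_left) simp_all
  also have "\<dots> = (\<Sum>i<8. \<Sum>j<8. cmul (\<lambda>C. pd i (f j) x * cmul (cgen i) (cgen j) C) y C)"
    by (subst cmul_sum_left) simp_all
  also have "\<dots> = (\<Sum>i<8. \<Sum>j<8. pd i (f j) x * cmul (cmul (cgen i) (cgen j)) y C)"
  proof -
    have "\<And>i j. cmul (\<lambda>C. pd i (f j) x * cmul (cgen i) (cgen j) C) y =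
       cscale (pd i (f j) x) (cmul (cmul (cgen i) (cgen j)) y)"
      using cmul_cscale_left unfolding cscale_def by blast
    then show ?thesis by (simp add: cscale_def)
  qed
  finally show ?thesis .
qed

lemma DI_eq: "k < 8 \<Longrightarrow> cmul (cDirac f x) cI (set (gl k)) = Dleft f x k / 16"
  unfolding cDirac_mul Dleft_def
  by (simp add: NI sum_divide_distrib mult.commute)

lemma DW_eq: "k < 8 \<Longrightarrow> cmul (cDirac f x) cW (set (gl k)) = (Dright f x k - Dleft f x k) / 2"
  unfolding cDirac_mul Dleft_def Dright_def
  by (simp add: NW sum_divide_distrib sum_subtractf[symmetric] algebra_simps)

lemma card0_outside: "card A = 0 \<Longrightarrow> A \<noteq> {} \<Longrightarrow> \<not> A \<subseteq> {1..7::nat}"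
  using finite_subset by fastforce

lemma grade0_iff: "grade 0 (cmul a b) = (\<lambda>_. 0) \<longleftrightarrow> cmul a b {} = 0"
proof
  assume "grade 0 (cmul a b) = (\<lambda>_. 0)"
  then show "cmul a b {} = 0" by (metis grade_def card.empty)
next
  assume h: "cmul a b {} = 0"
  show "grade 0 (cmul a b) = (\<lambda>_. 0)"
  proof (rule ext)
    fix A show "grade 0 (cmul a b) A = 0"
      using h card0_outside[of A] cmul_outside[of A] by (auto simp: grade_def)
  qed
qed

lemma grade1_iff: "grade 1 (cmul a b) = (\<lambda>_. 0) \<longleftrightarrow> (\<forall>k. 1 \<le> k \<and> k < 8 \<longrightarrow> cmul a b {k} = 0)"
proof
  assume h: "grade 1 (cmul a b) = (\<lambda>_. 0)"
  show "\<forall>k. 1 \<le> k \<and> k < 8 \<longrightarrow> cmul a b {k} = 0"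
  proof (intro allI impI)
    fix k :: nat
    have "grade 1 (cmul a b) {k} = 0" using h by simp
    then show "cmul a b {k} = 0" by (simp add: grade_def)
  qed
next
  assume h: "\<forall>k. 1 \<le> k \<and> k < 8 \<longrightarrow> cmul a b {k} = 0"
  show "grade 1 (cmul a b) = (\<lambda>_. 0)"
  proof (rule ext)
    fix A
    show "grade 1 (cmul a b) A = 0"
    proof (cases "card A = 1")
      case True
      then obtain k where A: "A = {k}" by (auto simp: card_Suc_eq)
      show ?thesis
      proof (cases "1 \<le> k \<and> k < 8")
        case True then show ?thesis using h A by (simp add: grade_def)
      next
        case False
        then have "\<not> A \<subseteq> {1..7}" using A by auto
        then show ?thesis using cmul_outside by (simp add: grade_def)
      qed
    qed (simp add: grade_def)
  qed
qed

lemma R0: "Dright f x 0 = Dleft f x 0"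
proof -
  have "\<And>i j. oprod j i 0 = oprod i j 0"
    by (auto simp: oprod_def oprod_tab)
  then show ?thesis unfolding Dleft_def Dright_def by simp
qed

lemma gl0: "set (gl 0) = {}" and glk: "k \<noteq> 0 \<Longrightarrow> set (gl k) = {k}"
  by (simp_all add: gl_def)

lemma split0: "(\<forall>k<(8::nat). P k) = (P 0 \<and> (\<forall>k. 1 \<le> k \<and> k < 8 \<longrightarrow> P k))"
proof
  assume "\<forall>k<8. P k" thus "P 0 \<and> (\<forall>k. 1 \<le> k \<and> k < 8 \<longrightarrow> P k)" by simp
next
  assume h: "P 0 \<and> (\<forall>k. 1 \<le> k \<and> k < 8 \<longrightarrow> P k)"
  show "\<forall>k<8. P k"
  proof (intro allI impI)
    fix k :: nat assume "k < 8" then show "P k" using h by (cases "k = 0") auto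
  qed
qed

lemma keyI: "(grade 0 (cmul (cDirac f x) cI) = (\<lambda>_. 0) \<and> grade 1 (cmul (cDirac f x) cI) = (\<lambda>_. 0))
   \<longleftrightarrow> (\<forall>k<8. Dleft f x k = 0)"
proof -
  have e0: "cmul (cDirac f x) cI {} = Dleft f x 0 / 16" using DI_eq[of 0] gl0 by simp
  have ek: "\<And>k. 1 \<le> k \<and> k < 8 \<Longrightarrow> cmul (cDirac f x) cI {k} = Dleft f x k / 16"
    using DI_eq glk by fastforce
  show ?thesis unfolding grade0_iff grade1_iff e0 split0[of "\<lambda>k. Dleft f x k = 0"] using ek
    by auto
qed

lemma keyW: "grade 1 (cmul (cDirac f x) cW) = (\<lambda>_. 0)
   \<longleftrightarrow> (\<forall>k. 1 \<le> k \<and> k < 8 \<longrightarrow> Dright f x k = Dleft f x k)"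
proof -
  have ek: "\<And>k. 1 \<le> k \<and> k < 8 \<Longrightarrow> cmul (cDirac f x) cW {k} = (Dright f x k - Dleft f x k) / 2"
    using DW_eq glk by fastforce
  show ?thesis unfolding grade1_iff using ek by auto
qed

theorem theorem5p2:
  fixes f :: "nat \<Rightarrow> real^8 \<Rightarrow> real"
  assumes "has_partials f"
  shows "(left_regular f \<longleftrightarrow>
            (\<forall>x. grade 0 (cmul (cDirac f x) cI) = (\<lambda>_. 0) \<and>
                 grade 1 (cmul (cDirac f x) cI) = (\<lambda>_. 0)))
       \<and> ((left_regular f \<and> right_regular f) \<longleftrightarrow>
            (\<forall>x. grade 0 (cmul (cDirac f x) cI) = (\<lambda>_. 0) \<and>
                 grade 1 (cmul (cDirac f x) cI) = (\<lambda>_. 0) \<and>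
                 grade 1 (cmul (cDirac f x) cW) = (\<lambda>_. 0)))"
proof -
  have A: "left_regular f \<longleftrightarrow> (\<forall>x. grade 0 (cmul (cDirac f x) cI) = (\<lambda>_. 0) \<and>
                 grade 1 (cmul (cDirac f x) cI) = (\<lambda>_. 0))"
    unfolding left_regular_def keyI by simp
  have B: "(left_regular f \<and> right_regular f) \<longleftrightarrow>
            (\<forall>x. grade 0 (cmul (cDirac f x) cI) = (\<lambda>_. 0) \<and>
                 grade 1 (cmul (cDirac f x) cI) = (\<lambda>_. 0) \<and>
                 grade 1 (cmul (cDirac f x) cW) = (\<lambda>_. 0))"
  proof -
    have "((\<forall>k<8. Dleft f x k = 0) \<and> (\<forall>k<8. Dright f x k = 0)) \<longleftrightarrow>
       ((\<forall>k<8. Dleft f x k = 0) \<and> (\<forall>k. 1 \<le> k \<and> k < 8 \<longrightarrow> Dright f x k = Dleft f x k))" for x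
    proof (cases "\<forall>k<8. Dleft f x k = 0")
      case True
      have "(\<forall>k<8. Dright f x k = 0) \<longleftrightarrow> (\<forall>k. 1 \<le> k \<and> k < 8 \<longrightarrow> Dright f x k = 0)"
        using split0[of "\<lambda>k. Dright f x k = 0"] R0[of f x] True by auto
      moreover have "(\<forall>k. 1 \<le> k \<and> k < 8 \<longrightarrow> Dright f x k = 0) \<longleftrightarrow>
          (\<forall>k. 1 \<le> k \<and> k < 8 \<longrightarrow> Dright f x k = Dleft f x k)" using True by auto
      ultimately show ?thesis using True by simp
    next
      case False then show ?thesis by blast
    qed
    then show ?thesis
      unfolding left_regular_def right_regular_def keyW conj_assoc[symmetric] keyI
      by blast
  qed
  show ?thesis using A B by blast
qed

end
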